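(* Let $\Psi$ be a uniformly random potential on $[K]\times[K]$, let $W_K$ be its number of pure Nash equilibria and $\eta_{W_K}$ the pure Nash equilibrium with the largest potential. Then for every $\delta>0$, \[ \lim_{K\to\infty}\mathbb{P}\left(\frac{\Psi(\eta_{W_K})}{K\log K}<1+\delta\right)=1. \]
   Context: For an integer $K\ge2$ let $[K]=\{1,\dots,K\}$. A potential is a bijection $\Psi:[K]\times[K]\to[K^2]$, representing a two-player game where player A chooses the row, player B the column, and lower potential is better; a uniformly random potential is a uniformly random such bijection. A pure Nash equilibrium is a profile $(a^*,b^* )$ with $\Psi(a^*,b^* )\le\Psi(a,b^* )$ for all $a\in[K]$ and $\Psi(a^*,b^* )\le\Psi(a^*,b)$ for all $b\in[K]$ (i.e. its value is the minimum of its row and of its column). Pure Nash equilibria are ordered by increasing potential $\eta_1,\dots,\eta_{W_K}$. *)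

theory Defs
  imports "HOL-Probability.Probability"
begin

text \<open>Potentials on [K] x [K]: bijections onto [K^2], extensional (undefined outside the grid)
  so that the set of potentials is finite and the uniform distribution is pmf_of_set.\<close>

definition grid :: "nat \<Rightarrow> (nat \<times> nat) set" where
  "grid K = {1..K} \<times> {1..K}"

definition potentials :: "nat \<Rightarrow> (nat \<times> nat \<Rightarrow> nat) set" where
  "potentials K = {\<Psi>. bij_betw \<Psi> (grid K) {1..K^2} \<and> \<Psi> \<in> extensional (grid K)}"

definition is_PNE :: "nat \<Rightarrow> (nat \<times> nat \<Rightarrow> nat) \<Rightarrow> nat \<times> nat \<Rightarrow> bool" where
  "is_PNE K \<Psi> p \<longleftrightarrow> p \<in> grid K \<and>
     (\<forall>a\<in>{1..K}. \<Psi> p \<le> \<Psi> (a, snd p)) \<and>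
     (\<forall>b\<in>{1..K}. \<Psi> p \<le> \<Psi> (fst p, b))"

definition max_PNE_potential :: "nat \<Rightarrow> (nat \<times> nat \<Rightarrow> nat) \<Rightarrow> nat" where
  "max_PNE_potential K \<Psi> = Max (\<Psi> ` {p. is_PNE K \<Psi> p})"

definition random_potential :: "nat \<Rightarrow> (nat \<times> nat \<Rightarrow> nat) pmf" where
  "random_potential K = pmf_of_set (potentials K)"

end

theory Submission imports Defs begin

lemma choose_step: "Suc k * (n choose Suc k) = (n - k) * (n choose k)"
  using binomial_absorption[of k n] binomial_absorb_comp[of n k] by simp

lemma binom_ratio:
  assumes "t \<le> N"
  shows "real (t choose s) * real N ^ s \<le> real t ^ s * real (N choose s)"
proof (induction s)
  case 0 then show ?case by simp
next
  case (Suc s)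
  have A: "real (Suc s) * real (t choose Suc s) = real (t - s) * real (t choose s)"
    using choose_step[of s t] by (metis of_nat_mult)
  have B: "real (Suc s) * real (N choose Suc s) = real (N - s) * real (N choose s)"
    using choose_step[of s N] by (metis of_nat_mult)
  have C: "real (t - s) * real N \<le> real t * real (N - s)"
  proof (cases "s \<le> t")
    case True
    then have "s \<le> N" using assms by simp
    have "real s * real t \<le> real s * real N" using assms by (simp add: mult_left_mono)
    then show ?thesis using True \<open>s \<le> N\<close> by (simp add: of_nat_diff algebra_simps)
  next
    case False then show ?thesis by simp
  qed
  have "real (Suc s) * (real (t choose Suc s) * real N ^ Suc s)
      = (real (Suc s) * real (t choose Suc s)) * (real N * real N ^ s)"
    by (simp only: power_Suc mult_ac)
  also have "\<dots> = (real (t - s) * real (t choose s)) * (real N * real N ^ s)"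
    using A by simp
  also have "\<dots> = (real (t - s) * real N) * (real (t choose s) * real N ^ s)"
    by (simp only: mult_ac)
  also have "\<dots> \<le> (real (t - s) * real N) * (real t ^ s * real (N choose s))"
    by (rule mult_left_mono[OF Suc.IH]) simp
  also have "\<dots> \<le> (real t * real (N - s)) * (real t ^ s * real (N choose s))"
    by (rule mult_right_mono[OF C]) simp
  also have "\<dots> = (real (N - s) * real (N choose s)) * (real t * real t ^ s)"
    by (simp only: mult_ac)
  also have "\<dots> = (real (Suc s) * real (N choose Suc s)) * (real t * real t ^ s)"
    using B by simp
  also have "\<dots> = real (Suc s) * (real t ^ Suc s * real (N choose Suc s))"
    by (simp only: power_Suc mult_ac)
  finally show ?case by (simp only: mult_le_cancel_left_pos of_nat_0_less_iff zero_less_Suc)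
qed

lemma finite_potentials: "finite (potentials K)"
proof -
  have "potentials K \<subseteq> PiE (grid K) (\<lambda>_. {1..K^2})"
    unfolding potentials_def bij_betw_def by (auto simp: PiE_def Pi_def)
  moreover have "finite (grid K)" unfolding grid_def by simp
  ultimately show ?thesis by (meson finite_PiE finite_atLeastAtMost finite_subset)
qed

lemma perm_exists:
  assumes "finite A" "U \<subseteq> A" "U' \<subseteq> A" "card U = card U'"
  shows "\<exists>\<sigma>. bij_betw \<sigma> A A \<and> \<sigma> ` U = U'"
proof -
  have fU: "finite U" "finite U'" using assms(1,2,3) finite_subset by auto
  obtain f where f: "bij_betw f U U'" using finite_same_card_bij[OF fU assms(4)] by blast
  have cd1: "card (A - U) = card A - card U" using assms(2) fU(1) by (rule card_Diff_subset[rotated])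
  have cd2: "card (A - U') = card A - card U'" using assms(3) fU(2) by (rule card_Diff_subset[rotated])
  have fD: "finite (A - U)" "finite (A - U')" using assms(1) by simp_all
  obtain g where g: "bij_betw g (A - U) (A - U')"
    using finite_same_card_bij[OF fD] cd1 cd2 assms(4) by metis
  define \<sigma> where "\<sigma> x = (if x \<in> U then f x else g x)" for x
  have "bij_betw \<sigma> U U' = bij_betw f U U'" by (rule bij_betw_cong) (simp add: \<sigma>_def)
  then have 1: "bij_betw \<sigma> U U'" using f by simp
  have "bij_betw \<sigma> (A - U) (A - U') = bij_betw g (A - U) (A - U')" by (rule bij_betw_cong) (simp add: \<sigma>_def)
  then have 2: "bij_betw \<sigma> (A - U) (A - U')" using g by simp
  have dj: "U' \<inter> (A - U') = {}" by blast
  have 3: "bij_betw \<sigma> (U \<union> (A - U)) (U' \<union> (A - U'))" using bij_betw_combine[OF 1 2 dj] .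
  have e1: "U \<union> (A - U) = A" using assms(2) by blast
  have e2: "U' \<union> (A - U') = A" using assms(3) by blast
  have "bij_betw \<sigma> A A" using 3 unfolding e1 e2 .
  moreover have "\<sigma> ` U = U'" using 1 by (simp add: bij_betw_def)
  ultimately show ?thesis by blast
qed

definition fib :: "nat \<Rightarrow> (nat \<times> nat) set \<Rightarrow> nat set \<Rightarrow> (nat \<times> nat \<Rightarrow> nat) set" where
  "fib K S U = {\<Psi> \<in> potentials K. \<Psi> ` S = U}"

lemma fib_le:
  assumes "S \<subseteq> grid K" "U \<subseteq> {1..K^2}" "U' \<subseteq> {1..K^2}" "card U = card U'"
  shows "card (fib K S U) \<le> card (fib K S U')"
proof -
  obtain \<sigma> where \<sigma>: "bij_betw \<sigma> {1..K^2} {1..K^2}" "\<sigma> ` U = U'"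
    using perm_exists[of "{1..K^2}" U U'] assms by auto
  define F where "F \<Psi> = restrict (\<sigma> \<circ> \<Psi>) (grid K)" for \<Psi>
  have "F ` fib K S U \<subseteq> fib K S U'"
  proof
    fix \<Phi> assume "\<Phi> \<in> F ` fib K S U"
    then obtain \<Psi> where \<Psi>: "\<Psi> \<in> fib K S U" "\<Phi> = F \<Psi>" by blast
    have b: "bij_betw \<Psi> (grid K) {1..K^2}" "\<Psi> ` S = U" using \<Psi> by (auto simp: fib_def potentials_def)
    have "bij_betw (\<sigma> \<circ> \<Psi>) (grid K) {1..K^2}" using b \<sigma> bij_betw_trans by blast
    then have "bij_betw \<Phi> (grid K) {1..K^2}" unfolding \<Psi> F_def
      by (rule bij_betw_cong[THEN iffD1, rotated]) simp
    moreover have "\<Phi> \<in> extensional (grid K)" unfolding \<Psi> F_def by simp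
    moreover have "\<Phi> ` S = (\<sigma> \<circ> \<Psi>) ` S" unfolding \<Psi> F_def
      using assms(1) by (intro image_cong) auto
    moreover have "(\<sigma> \<circ> \<Psi>) ` S = U'" using b \<sigma> by (simp only: image_comp[symmetric])
    ultimately show "\<Phi> \<in> fib K S U'" by (simp add: fib_def potentials_def)
  qed
  moreover have "inj_on F (fib K S U)"
  proof
    fix \<Psi>1 \<Psi>2 assume a: "\<Psi>1 \<in> fib K S U" "\<Psi>2 \<in> fib K S U" "F \<Psi>1 = F \<Psi>2"
    have b1: "bij_betw \<Psi>1 (grid K) {1..K^2}" "\<Psi>1 \<in> extensional (grid K)"
      using a by (auto simp: fib_def potentials_def)
    have b2: "bij_betw \<Psi>2 (grid K) {1..K^2}" "\<Psi>2 \<in> extensional (grid K)"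
      using a by (auto simp: fib_def potentials_def)
    show "\<Psi>1 = \<Psi>2"
    proof (rule extensionalityI[OF b1(2) b2(2)])
      fix x assume x: "x \<in> grid K"
      have "\<sigma> (\<Psi>1 x) = \<sigma> (\<Psi>2 x)" using fun_cong[OF a(3), of x] x by (simp add: F_def)
      moreover have "\<Psi>1 x \<in> {1..K^2}" "\<Psi>2 x \<in> {1..K^2}"
        using b1 b2 x by (auto simp: bij_betw_def)
      ultimately show "\<Psi>1 x = \<Psi>2 x" using \<sigma>(1) by (auto simp: bij_betw_def inj_on_def)
    qed
  qed
  moreover have "finite (fib K S U')" using finite_potentials[of K]
    by (rule finite_subset[rotated]) (auto simp: fib_def)
  ultimately show ?thesis by (meson card_inj_on_le)
qed

lemma pot_image:
  assumes "\<Psi> \<in> potentials K" "S \<subseteq> grid K"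
  shows "\<Psi> ` S \<subseteq> {1..K^2}" "card (\<Psi> ` S) = card S"
proof -
  have b: "bij_betw \<Psi> (grid K) {1..K^2}" using assms by (simp add: potentials_def)
  then show "\<Psi> ` S \<subseteq> {1..K^2}" using assms(2) by (auto simp: bij_betw_def)
  have "inj_on \<Psi> S" using b assms(2) by (auto simp: bij_betw_def intro: inj_on_subset)
  then show "card (\<Psi> ` S) = card S" by (rule card_image)
qed

lemma count_sub:
  assumes "S \<subseteq> grid K" "T \<subseteq> {1..K^2}"
  shows "card {\<Psi> \<in> potentials K. \<Psi> ` S \<subseteq> T} * (K^2 choose card S)
       = (card T choose card S) * card (potentials K)"
proof -
  define s where "s = card S"
  define C where "C X = {U. U \<subseteq> X \<and> card U = s}" for X :: "nat set"
  have ex: "\<exists>c. \<forall>U \<in> C {1..K^2}. card (fib K S U) = c"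
  proof (cases "C {1..K^2} = {}")
    case True then show ?thesis by auto
  next
    case False
    then obtain U0 where U0: "U0 \<in> C {1..K^2}" by blast
    show ?thesis
    proof (intro exI ballI)
      fix U assume "U \<in> C {1..K^2}"
      then show "card (fib K S U) = card (fib K S U0)"
        using U0 fib_le[OF assms(1)] unfolding C_def by (metis (mono_tags, lifting) le_antisym mem_Collect_eq)
    qed
  qed
  then obtain c where c: "\<And>U. U \<in> C {1..K^2} \<Longrightarrow> card (fib K S U) = c" by blast
  have cnt: "card {\<Psi> \<in> potentials K. \<Psi> ` S \<subseteq> X} = (card X choose s) * c"
    if X: "X \<subseteq> {1..K^2}" for X
  proof -
    have fX: "finite X" using X finite_subset by blast
    have eq: "{\<Psi> \<in> potentials K. \<Psi> ` S \<subseteq> X} = (\<Union>U\<in>C X. fib K S U)"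
      using pot_image[OF _ assms(1)] by (auto simp: C_def fib_def s_def)
    have fC: "finite (C X)" unfolding C_def using fX by simp
    have "card (\<Union>U\<in>C X. fib K S U) = (\<Sum>U\<in>C X. card (fib K S U))"
    proof (rule card_UN_disjoint[OF fC])
      show "\<forall>i\<in>C X. finite (fib K S i)"
        using finite_potentials[of K] by (auto simp: fib_def intro: finite_subset[rotated])
      show "\<forall>i\<in>C X. \<forall>j\<in>C X. i \<noteq> j \<longrightarrow> fib K S i \<inter> fib K S j = {}"
        by (auto simp: fib_def)
    qed
    also have "\<dots> = (\<Sum>U\<in>C X. c)"
      using c X by (intro sum.cong) (auto simp: C_def)
    also have "\<dots> = card (C X) * c" by simp
    also have "card (C X) = card X choose s" unfolding C_def using n_subsets[OF fX] by simp
    finally show ?thesis using eq by simp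
  qed
  have "potentials K = {\<Psi> \<in> potentials K. \<Psi> ` S \<subseteq> {1..K^2}}"
    using pot_image[OF _ assms(1)] by auto
  then have "card (potentials K) = (K^2 choose s) * c" using cnt[of "{1..K^2}"] by simp
  then show ?thesis using cnt[OF assms(2)] unfolding s_def by simp
qed

lemma prob_sub_le:
  assumes "S \<subseteq> grid K" "T \<subseteq> {1..K^2}" "K > 0"
  shows "real (card {\<Psi> \<in> potentials K. \<Psi> ` S \<subseteq> T})
       \<le> (real (card T) / real (K^2)) ^ card S * real (card (potentials K))"
proof -
  define s where "s = card S"
  define N where "N = K^2"
  have tN: "card T \<le> N" using card_mono[OF _ assms(2)] by (simp add: N_def)
  have Npos: "N > 0" using assms by (simp add: N_def)
  have cS: "s \<le> N"
  proof -
    have "card S \<le> card (grid K)" using assms(1) by (intro card_mono) (auto simp: grid_def)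
    then show ?thesis by (simp add: grid_def s_def N_def power2_eq_square)
  qed
  have pos: "real (N choose s) > 0" using cS by simp
  have e: "real (card {\<Psi> \<in> potentials K. \<Psi> ` S \<subseteq> T}) * real (N choose s)
      = real (card T choose s) * real (card (potentials K))"
  proof -
    have e0: "card {\<Psi> \<in> potentials K. \<Psi> ` S \<subseteq> T} * (N choose s) = (card T choose s) * card (potentials K)"
      using count_sub[OF assms(1,2)] unfolding s_def N_def .
    show ?thesis using arg_cong[where f=real, OF e0] by (simp only: of_nat_mult)
  qed
  have Ns: "real N ^ s > 0" using Npos by simp
  have "real (card T choose s) \<le> real (card T) ^ s * real (N choose s) / real N ^ s"
    using binom_ratio[OF tN, of s] Ns by (simp add: pos_le_divide_eq)
  also have "\<dots> = (real (card T) / real N) ^ s * real (N choose s)" by (simp add: power_divide)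
  finally have r: "real (card T choose s) \<le> (real (card T) / real N) ^ s * real (N choose s)" .
  have "real (card {\<Psi> \<in> potentials K. \<Psi> ` S \<subseteq> T}) * real (N choose s)
      \<le> ((real (card T) / real N) ^ s * real (N choose s)) * real (card (potentials K))"
    unfolding e by (rule mult_right_mono[OF r]) simp
  also have "\<dots> = ((real (card T) / real N) ^ s * real (card (potentials K))) * real (N choose s)"
    by (simp only: mult_ac)
  finally have "real (card {\<Psi> \<in> potentials K. \<Psi> ` S \<subseteq> T})
      \<le> (real (card T) / real N) ^ s * real (card (potentials K))"
    using pos by (rule mult_right_le_imp_le)
  then show ?thesis unfolding s_def N_def .
qed

lemma PNE_exists:
  assumes "\<Psi> \<in> potentials K" "K > 0"
  shows "\<exists>p. is_PNE K \<Psi> p"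
proof -
  have fg: "finite (grid K)" "grid K \<noteq> {}" using assms(2) by (auto simp: grid_def)
  then have "Min (\<Psi> ` grid K) \<in> \<Psi> ` grid K" by simp
  then obtain p where p: "p \<in> grid K" "\<Psi> p = Min (\<Psi> ` grid K)" by auto
  have le: "\<Psi> p \<le> \<Psi> q" if "q \<in> grid K" for q using p that fg by simp
  have "p \<in> grid K" using p(1) .
  moreover have "\<forall>a\<in>{1..K}. \<Psi> p \<le> \<Psi> (a, snd p)"
    using p(1) by (intro ballI le) (auto simp: grid_def mem_Times_iff)
  moreover have "\<forall>b\<in>{1..K}. \<Psi> p \<le> \<Psi> (fst p, b)"
    using p(1) by (intro ballI le) (auto simp: grid_def mem_Times_iff)
  ultimately have "is_PNE K \<Psi> p" unfolding is_PNE_def by blast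
  then show ?thesis by blast
qed

lemma bad_bound:
  assumes K: "K \<ge> 2" and \<Psi>: "\<Psi> \<in> potentials K"
    and m: "real (max_PNE_potential K \<Psi>) \<ge> c"
  shows "\<exists>p\<in>grid K. \<Psi> ` (({1..K} \<times> {snd p}) \<union> ({fst p} \<times> {1..K})) \<subseteq> {v \<in> {1..K^2}. real v \<ge> c}"
proof -
  have fin: "finite {p. is_PNE K \<Psi> p}"
    by (rule finite_subset[of _ "grid K"]) (auto simp: is_PNE_def grid_def)
  have ne: "{p. is_PNE K \<Psi> p} \<noteq> {}" using PNE_exists[OF \<Psi>] K by auto
  have "max_PNE_potential K \<Psi> \<in> \<Psi> ` {p. is_PNE K \<Psi> p}"
    unfolding max_PNE_potential_def using fin ne by (intro Max_in) auto
  then obtain p where p: "is_PNE K \<Psi> p" "\<Psi> p = max_PNE_potential K \<Psi>" by auto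
  have pg: "p \<in> grid K" using p by (simp add: is_PNE_def)
  have sub: "({1..K} \<times> {snd p}) \<union> ({fst p} \<times> {1..K}) \<subseteq> grid K"
    using pg by (auto simp: grid_def mem_Times_iff)
  have "\<Psi> x \<ge> \<Psi> p" if "x \<in> ({1..K} \<times> {snd p}) \<union> ({fst p} \<times> {1..K})" for x
    using p(1) that unfolding is_PNE_def by auto
  then have "real (\<Psi> x) \<ge> c" if "x \<in> ({1..K} \<times> {snd p}) \<union> ({fst p} \<times> {1..K})" for x
    using that m p(2) by (metis of_nat_le_iff order_trans)
  then show ?thesis using pg pot_image(1)[OF \<Psi> sub] by blast
qed

lemma card_cross:
  assumes "p \<in> grid K"
  shows "card (({1..K} \<times> {snd p}) \<union> ({fst p} \<times> {1..K})) = 2 * K - 1"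
proof -
  have i: "({1..K} \<times> {snd p}) \<inter> ({fst p} \<times> {1..K}) = {p}"
    using assms by (cases p) (auto simp: grid_def)
  have "card (({1..K} \<times> {snd p}) \<union> ({fst p} \<times> {1..K})) + card {p} = K + K"
    using card_Un_Int[of "{1..K} \<times> {snd p}" "{fst p} \<times> {1..K}"] i by (simp add: card_cartesian_product)
  then show ?thesis by simp
qed

lemma card_T_bound:
  assumes "K > 0"
  shows "(real (card {v \<in> {1..K^2}. real v \<ge> c}) / real (K^2)) ^ (2*K-1)
     \<le> exp (- ((c - 1) * (2 * real K - 1) / real K ^ 2))"
proof (cases "{v \<in> {1..K^2}. real v \<ge> c} = {}")
  case True
  have "2*K-1 > 0" using assms by simp
  then show ?thesis by (simp only: True card.empty of_nat_0 div_0 zero_power[OF \<open>2*K-1 > 0\<close>]) simp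
next
  case False
  define N where "N = K^2"
  define T where "T = {v \<in> {1..N}. real v \<ge> c}"
  obtain v where v: "v \<in> T" using False unfolding T_def N_def by blast
  have cN: "c \<le> real N" using v unfolding T_def by auto
  define a where "a = nat \<lceil>c\<rceil>"
  have aN: "a \<le> N" using cN unfolding a_def by linarith
  have "T \<subseteq> {a..N}" unfolding T_def a_def by auto
  then have "card T \<le> card {a..N}" by (intro card_mono) auto
  then have tb: "real (card T) \<le> real N + 1 - c" using aN unfolding a_def
    by (simp add: of_nat_diff) linarith
  have Npos: "real N > 0" using assms by (simp add: N_def)
  have "real (card T) / real N \<le> 1 - (c - 1) / real N"
    using tb Npos by (simp add: field_simps)
  also have "\<dots> \<le> exp (- ((c - 1) / real N))" using exp_ge_add_one_self[of "- ((c - 1) / real N)"] by simp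
  finally have "(real (card T) / real N) ^ (2*K-1) \<le> exp (- ((c - 1) / real N)) ^ (2*K-1)"
    by (intro power_mono) auto
  also have "\<dots> = exp (- ((c - 1) * (2 * real K - 1) / real K ^ 2))"
    using assms by (simp add: exp_of_nat_mult[symmetric] N_def of_nat_diff field_simps)
  finally show ?thesis unfolding T_def N_def .
qed

lemma potentials_ne: "potentials K \<noteq> {}"
proof -
  have "card (grid K) = card {1..K^2}" by (simp add: grid_def power2_eq_square)
  then obtain h where h: "bij_betw h (grid K) {1..K^2}"
    using finite_same_card_bij[of "grid K" "{1..K^2}"] by (auto simp: grid_def)
  have "restrict h (grid K) \<in> potentials K" unfolding potentials_def
    using h by (simp add: bij_betw_cong[of "grid K" "restrict h (grid K)" h])
  then show ?thesis by blast
qed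

lemma main_bound:
  assumes K: "K \<ge> 2"
  shows "1 - real K ^ 2 * exp (- (((1+\<delta>) * real K * ln (real K) - 1) * (2 * real K - 1) / real K ^ 2))
    \<le> measure_pmf.prob (random_potential K)
            {\<Psi>. real (max_PNE_potential K \<Psi>) / (real K * ln (real K)) < 1 + \<delta>}"
proof -
  define c where "c = (1+\<delta>) * real K * ln (real K)"
  define E where "E = exp (- ((c - 1) * (2 * real K - 1) / real K ^ 2))"
  define pot where "pot = potentials K"
  define G where "G = {\<Psi>. real (max_PNE_potential K \<Psi>) / (real K * ln (real K)) < 1 + \<delta>}"
  define T where "T = {v \<in> {1..K^2}. real v \<ge> c}"
  define S where "S p = ({1..K} \<times> {snd p}) \<union> ({fst p} \<times> {1..K})" for p :: "nat \<times> nat"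
  have fin: "finite pot" "pot \<noteq> {}" using finite_potentials potentials_ne by (auto simp: pot_def)
  have lnpos: "real K * ln (real K) > 0" using K by simp
  have Bsub: "pot - G \<subseteq> (\<Union>p\<in>grid K. {\<Psi> \<in> pot. \<Psi> ` S p \<subseteq> T})"
  proof
    fix \<Psi> assume a: "\<Psi> \<in> pot - G"
    then have "1 + \<delta> \<le> real (max_PNE_potential K \<Psi>) / (real K * ln (real K))" by (auto simp: G_def)
    then have "c \<le> real (max_PNE_potential K \<Psi>)" using lnpos unfolding c_def
      by (simp add: pos_le_divide_eq mult.assoc)
    then show "\<Psi> \<in> (\<Union>p\<in>grid K. {\<Psi> \<in> pot. \<Psi> ` S p \<subseteq> T})"
      using bad_bound[OF K, of \<Psi> c] a unfolding S_def T_def pot_def by auto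
  qed
  have gf: "finite (grid K)" by (simp add: grid_def)
  have "real (card (pot - G)) \<le> real (card (\<Union>p\<in>grid K. {\<Psi> \<in> pot. \<Psi> ` S p \<subseteq> T}))"
  proof -
    have "finite (\<Union>p\<in>grid K. {\<Psi> \<in> pot. \<Psi> ` S p \<subseteq> T})"
      using fin(1) by (rule finite_subset[rotated]) auto
    then show ?thesis using Bsub by (intro of_nat_mono card_mono) auto
  qed
  also have "\<dots> \<le> real (\<Sum>p\<in>grid K. card {\<Psi> \<in> pot. \<Psi> ` S p \<subseteq> T})"
    by (intro of_nat_mono card_UN_le gf)
  also have "\<dots> = (\<Sum>p\<in>grid K. real (card {\<Psi> \<in> pot. \<Psi> ` S p \<subseteq> T}))" by simp
  also have "\<dots> \<le> (\<Sum>p\<in>grid K. E * real (card pot))"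
  proof (intro sum_mono)
    fix p assume p: "p \<in> grid K"
    have Sg: "S p \<subseteq> grid K" using p by (auto simp: S_def grid_def)
    have "real (card {\<Psi> \<in> pot. \<Psi> ` S p \<subseteq> T}) \<le> (real (card T) / real (K^2)) ^ card (S p) * real (card pot)"
      unfolding pot_def by (rule prob_sub_le[OF Sg]) (use K in \<open>auto simp: T_def\<close>)
    also have "card (S p) = 2 * K - 1" unfolding S_def by (rule card_cross[OF p])
    also have "(real (card T) / real (K^2)) ^ (2 * K - 1) \<le> E"
      unfolding T_def E_def using card_T_bound[of K c] K by simp
    finally show "real (card {\<Psi> \<in> pot. \<Psi> ` S p \<subseteq> T}) \<le> E * real (card pot)"
      by (simp add: mult_right_mono)
  qed
  also have "\<dots> = real K ^ 2 * E * real (card pot)" by (simp add: grid_def power2_eq_square)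
  finally have cb: "real (card (pot - G)) \<le> real K ^ 2 * E * real (card pot)" .
  have "card (pot \<inter> G) + card (pot - G) = card pot"
  proof -
    have "pot = (pot \<inter> G) \<union> (pot - G)" by blast
    then have "card pot = card ((pot \<inter> G) \<union> (pot - G))" by simp
    also have "\<dots> = card (pot \<inter> G) + card (pot - G)"
      by (rule card_Un_disjoint) (use fin in auto)
    finally show ?thesis by simp
  qed
  then have eqc: "real (card (pot \<inter> G)) = real (card pot) - real (card (pot - G))" by linarith
  have cp: "real (card pot) > 0" using fin by (simp add: card_gt_0_iff)
  have "measure_pmf.prob (random_potential K) G = real (card (pot \<inter> G)) / real (card pot)"
    unfolding random_potential_def pot_def using fin unfolding pot_def by (simp add: measure_pmf_of_set)
  also have "\<dots> = 1 - real (card (pot - G)) / real (card pot)" using cp eqc by (simp add: field_simps)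
  also have "\<dots> \<ge> 1 - real K ^ 2 * E" using cb cp by (simp add: field_simps)
  finally show ?thesis unfolding G_def E_def c_def .
qed

lemma f_le:
  fixes \<delta> :: real
  assumes d: "\<delta> > 0" and K: "K \<ge> 2" and Kd: "real K * \<delta> \<ge> 1 + \<delta>"
  shows "real K ^ 2 * exp (- (((1+\<delta>) * real K * ln (real K) - 1) * (2 * real K - 1) / real K ^ 2))
     \<le> exp 2 * real K powr (-\<delta>)"
proof -
  define x where "x = real K"
  define L where "L = ln x"
  have x2: "x \<ge> 2" using K by (simp add: x_def)
  have L0: "L \<ge> 0" using x2 by (simp add: L_def)
  have eq: "((1+\<delta>) * x * L - 1) * (2 * x - 1) / x ^ 2
      = ((1+\<delta>) * (2 * x - 1) / x) * L - (2 * x - 1) / x ^ 2"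
    using x2 by (simp add: field_simps power2_eq_square)
  have h1: "(1+\<delta>) * (2 * x - 1) / x \<ge> 2 + \<delta>"
    using x2 Kd by (simp add: field_simps x_def)
  have h2: "(2 * x - 1) / x ^ 2 \<le> 2"
  proof -
    have "x * 2 * 1 \<le> x * 2 * x" using x2 by (intro mult_left_mono) auto
    then have "x * 2 \<le> 1 + x * (x * 2)" by (simp add: algebra_simps)
    then show ?thesis using x2 by (simp add: field_simps power2_eq_square)
  qed
  have "((1+\<delta>) * (2 * x - 1) / x) * L \<ge> (2 + \<delta>) * L"
    using h1 L0 by (rule mult_right_mono)
  then have arg: "((1+\<delta>) * x * L - 1) * (2 * x - 1) / x ^ 2 \<ge> (2 + \<delta>) * L - 2"
    unfolding eq using h2 by linarith
  have "x ^ 2 * exp (- (((1+\<delta>) * x * L - 1) * (2 * x - 1) / x ^ 2)) \<le> x ^ 2 * exp (2 - (2 + \<delta>) * L)"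
    using arg by (intro mult_left_mono) auto
  also have "x ^ 2 * exp (2 - (2 + \<delta>) * L) = exp 2 * x powr (-\<delta>)"
  proof -
    have eL: "exp L = x" using x2 unfolding L_def by simp
    have "exp (2 * L) = exp L * exp L" unfolding mult_2 by (rule exp_add)
    then have x2e: "x ^ 2 = exp (2 * L)" unfolding eL by (simp add: power2_eq_square)
    have "exp (2 * L) * exp (2 - (2 + \<delta>) * L) = exp (2 * L + (2 - (2 + \<delta>) * L))"
      by (rule exp_add[symmetric])
    also have "2 * L + (2 - (2 + \<delta>) * L) = 2 + (-\<delta> * L)" by (simp add: algebra_simps)
    also have "exp (2 + (-\<delta> * L)) = exp 2 * exp (-\<delta> * L)" by (rule exp_add)
    also have "exp (-\<delta> * L) = x powr (-\<delta>)" using x2 by (simp add: powr_def L_def)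
    finally show ?thesis unfolding x2e .
  qed
  finally show ?thesis unfolding x_def L_def .
qed

lemma f_lim:
  fixes \<delta> :: real
  assumes d: "\<delta> > 0"
  shows "(\<lambda>K::nat. real K ^ 2 * exp (- (((1+\<delta>) * real K * ln (real K) - 1) * (2 * real K - 1) / real K ^ 2))) \<longlonglongrightarrow> 0"
proof (rule tendsto_sandwich[OF _ _ tendsto_const])
  have h: "(\<lambda>K::nat. real K powr (-\<delta>)) \<longlonglongrightarrow> 0"
    using d by (intro tendsto_neg_powr filterlim_real_sequentially) auto
  show "(\<lambda>K::nat. exp 2 * real K powr (-\<delta>)) \<longlonglongrightarrow> 0"
    using tendsto_mult[OF tendsto_const[of "exp 2"] h] by simp
  show "\<forall>\<^sub>F K in sequentially. 0 \<le> real K ^ 2 * exp (- (((1+\<delta>) * real K * ln (real K) - 1) * (2 * real K - 1) / real K ^ 2))"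
    by simp
  obtain N :: nat where N: "real N \<ge> (1 + \<delta>) / \<delta>" using real_arch_simple by blast
  have "\<forall>\<^sub>F K in sequentially. K \<ge> max 2 N" by (rule eventually_ge_at_top)
  then show "\<forall>\<^sub>F K in sequentially. real K ^ 2 * exp (- (((1+\<delta>) * real K * ln (real K) - 1) * (2 * real K - 1) / real K ^ 2)) \<le> exp 2 * real K powr (-\<delta>)"
  proof eventually_elim
    case (elim K)
    then have "N \<le> K" by simp
    then have "real N \<le> real K" by simp
    then have "real K \<ge> (1 + \<delta>) / \<delta>" using N by linarith
    then have "real K * \<delta> \<ge> 1 + \<delta>" using d by (simp add: field_simps)
    then show ?case using f_le[OF d, of K] elim by simp
  qed
qed

theorem theorem4p6:
  fixes \<delta> :: real
  assumes "\<delta> > 0"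
  shows "(\<lambda>K. measure_pmf.prob (random_potential K)
            {\<Psi>. real (max_PNE_potential K \<Psi>) / (real K * ln (real K)) < 1 + \<delta>})
         \<longlonglongrightarrow> 1"
proof -
  define f where "f K = real K ^ 2 * exp (- (((1+\<delta>) * real K * ln (real K) - 1) * (2 * real K - 1) / real K ^ 2))" for K :: nat
  have f0: "f \<longlonglongrightarrow> 0" unfolding f_def using f_lim[OF assms] .
  have l: "(\<lambda>K. 1 - f K) \<longlonglongrightarrow> 1" using tendsto_diff[OF tendsto_const[of "1::real"] f0] by simp
  show ?thesis
  proof (rule tendsto_sandwich[OF _ _ l tendsto_const])
    show "\<forall>\<^sub>F K in sequentially. 1 - f K \<le> measure_pmf.prob (random_potential K)
            {\<Psi>. real (max_PNE_potential K \<Psi>) / (real K * ln (real K)) < 1 + \<delta>}"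
      using eventually_ge_at_top[of 2]
    proof eventually_elim
      case (elim K)
      show ?case unfolding f_def by (rule main_bound[OF elim])
    qed
    show "\<forall>\<^sub>F K in sequentially. measure_pmf.prob (random_potential K)
            {\<Psi>. real (max_PNE_potential K \<Psi>) / (real K * ln (real K)) < 1 + \<delta>} \<le> 1"
      by (simp add: measure_pmf.prob_le_1)
  qed
qed

end
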